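(* Let $A,B\in\mathbb{C}^{n\times n}$ be nonzero matrices. If $\theta(A)+\theta(B)<\pi$, then $\det(I+BA)\neq0$.
   Context: For a nonzero $A\in\mathbb{C}^{n\times n}$, its singular angle $\theta(A)\in[0,\pi]$ is defined by $\cos\theta(A)=\inf\{\mathrm{Re}(x^*Ax)/(|x|\,|Ax|): 0\ne x\in\mathbb{C}^n,\ Ax\neq0\}$, where $|\cdot|$ is the Euclidean norm. *)

theory Defs
  imports "HOL-Analysis.Analysis"
begin

definition herm_inner :: "complex^'n \<Rightarrow> complex^'n \<Rightarrow> complex" where
  "herm_inner x y = (\<Sum>i\<in>UNIV. cnj (x $ i) * y $ i)"

definition singular_angle :: "complex^'n^'n \<Rightarrow> real" where
  "singular_angle A = arccos (Inf {Re (herm_inner x (A *v x)) / (norm x * norm (A *v x)) | x.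
      x \<noteq> 0 \<and> A *v x \<noteq> 0})"

end

theory Submission
  imports Defs
begin

lemma re_herm: "Re (herm_inner x y) = inner x y"
  unfolding herm_inner_def inner_vec_def inner_complex_def
  by (simp add: Re_sum)

lemma quot_bounds:
  fixes x y :: "complex^'n"
  assumes "x \<noteq> 0" "y \<noteq> 0"
  shows "\<bar>inner x y / (norm x * norm y)\<bar> \<le> 1"
proof -
  have p: "norm x * norm y > 0" using assms by simp
  have c: "\<bar>inner x y\<bar> \<le> norm x * norm y" by (rule Cauchy_Schwarz_ineq2)
  have "\<bar>inner x y / (norm x * norm y)\<bar> = \<bar>inner x y\<bar> / (norm x * norm y)"
    using p by (simp only: abs_divide abs_of_pos)
  also have "\<dots> \<le> 1" using c p by (simp only: pos_divide_le_eq mult_1)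
  finally show ?thesis .
qed

lemma inf_props:
  fixes A :: "complex^'n^'n"
  assumes "y \<noteq> 0" "A *v y \<noteq> 0"
  defines "S \<equiv> {Re (herm_inner x (A *v x)) / (norm x * norm (A *v x)) | x.
      x \<noteq> 0 \<and> A *v x \<noteq> 0}"
  shows "Inf S \<le> inner y (A *v y) / (norm y * norm (A *v y))"
    and "-1 \<le> Inf S" and "Inf S \<le> 1"
proof -
  have mem: "inner y (A *v y) / (norm y * norm (A *v y)) \<in> S"
    unfolding S_def using assms(1,2) by (auto simp: re_herm)
  have bdd: "bdd_below S"
    unfolding S_def bdd_below_def
  proof (intro exI[of _ "-1"] ballI)
    fix z assume "z \<in> {Re (herm_inner x (A *v x)) / (norm x * norm (A *v x)) | x.
      x \<noteq> 0 \<and> A *v x \<noteq> 0}"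
    then obtain x where "x \<noteq> 0" "A *v x \<noteq> 0" "z = inner x (A *v x) / (norm x * norm (A *v x))"
      by (auto simp: re_herm)
    thus "-1 \<le> z" using quot_bounds[of x "A *v x"] by linarith
  qed
  show 1: "Inf S \<le> inner y (A *v y) / (norm y * norm (A *v y))"
    by (rule cInf_lower[OF mem bdd])
  show "-1 \<le> Inf S"
    apply (rule cInf_greatest)
    using mem apply blast
  proof -
    fix z assume "z \<in> S"
    then obtain x where "x \<noteq> 0" "A *v x \<noteq> 0" "z = inner x (A *v x) / (norm x * norm (A *v x))"
      unfolding S_def by (auto simp: re_herm)
    thus "-1 \<le> z" using quot_bounds[of x "A *v x"] by linarith
  qed
  show "Inf S \<le> 1"
    using 1 abs_le_D1[OF quot_bounds[OF assms(1,2)]] by (rule order_trans)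
qed

theorem theorem2:
  fixes A B :: "complex^'n^'n"
  assumes "A \<noteq> 0" and "B \<noteq> 0"
    and "singular_angle A + singular_angle B < pi"
  shows "det (mat 1 + B ** A) \<noteq> 0"
proof
  assume "det (mat 1 + B ** A) = 0"
  hence "\<not> invertible (mat 1 + B ** A)" by (simp add: invertible_det_nz)
  then obtain y where y0: "y \<noteq> 0" and hy: "(mat 1 + B ** A) *v y = 0"
    unfolding invertible_left_inverse matrix_left_invertible_ker by blast
  define x where "x = A *v y"
  have Bx: "B *v x = - y" using hy unfolding x_def
    by (simp add: matrix_vector_mult_add_rdistrib matrix_vector_mul_assoc[symmetric] eq_neg_iff_add_eq_0 add.commute)
  have x0: "x \<noteq> 0" using Bx y0 by auto
  have Bx0: "B *v x \<noteq> 0" using Bx y0 by simp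
  define a where "a = Inf {Re (herm_inner x (A *v x)) / (norm x * norm (A *v x)) | x.
      x \<noteq> 0 \<and> A *v x \<noteq> 0}"
  define b where "b = Inf {Re (herm_inner x (B *v x)) / (norm x * norm (B *v x)) | x.
      x \<noteq> 0 \<and> B *v x \<noteq> 0}"
  note IA = inf_props[OF y0 x0[unfolded x_def], folded a_def x_def]
  note IB = inf_props[OF x0 Bx0, folded b_def]
  have p: "norm y * norm x > 0" using x0 y0 by simp
  have "a * (norm y * norm x) \<le> inner y x"
    using IA(1) p by (simp add: pos_le_divide_eq)
  moreover have "b * (norm y * norm x) \<le> - inner y x"
  proof -
    have p2: "norm x * norm y > 0" using p by (simp add: mult.commute)
    have "b \<le> inner x (B *v x) / (norm x * norm (B *v x))" by (rule IB(1))
    hence h: "b \<le> - (inner x y / (norm x * norm y))" using Bx by simp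
    have "b * (norm x * norm y) \<le> - (inner x y / (norm x * norm y)) * (norm x * norm y)"
      by (rule mult_right_mono[OF h]) (use p2 in simp)
    also have "\<dots> = - inner y x" using p2 by (simp add: inner_commute)
    finally show ?thesis by (simp add: mult.commute)
  qed
  ultimately have "(a + b) * (norm y * norm x) \<le> 0" by (simp add: distrib_right)
  hence "a + b \<le> 0" using p x0 y0 by (simp add: mult_le_0_iff)
  hence ab: "b \<le> - a" by simp
  have "arccos (-a) \<le> arccos b"
    using ab IA IB by (intro arccos_le_arccos) auto
  hence "pi - arccos a \<le> arccos b" using IA(2,3) by (simp add: arccos_minus)
  moreover have "singular_angle A = arccos a" "singular_angle B = arccos b"
    unfolding singular_angle_def a_def b_def by simp_all
  ultimately show False using assms(3) by simp
qed

end
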